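(* Let $H$ be a combinatorial Hopf monoid, $K\subseteq H$ a Hopf submonoid, $I$ a finite set and $h\in H_I$. Let $\Delta_h$ be the set of set compositions $C$ of $I$ all of whose minors $h_j$ are defined, and let $\Gamma_{K,h}\subseteq\Delta_h$ be the set of those $C\in\Delta_h$ such that some minor $h_j\notin K_{C_j}$. Then: (1) if $C\in\Gamma_{K,h}$ and $D\in\Delta_h$ is a coarsening of $C$ (each block of $D$ is a union of consecutive blocks of $C$, in order), then $D\in\Gamma_{K,h}$; (2) $\Psi_{\varphi_K}(h)=\sum_{C\in\Delta_h\setminus\Gamma_{K,h}}M_{\mathrm{type}(C)}$, i.e. $\Psi_{\varphi_K}(h)$ is the Ehrhart quasisymmetric function $E_{C(\Delta_h\setminus\Gamma_{K,h})}$ enumerating (via $\mathbf a\mapsto\prod_{i\in I}x_{a_i}$) the lattice points $\mathbf a\in\mathbb Z_{>0}^I$ which are constant on the blocks of some $C\in\Delta_h\setminus\Gamma_{K,h}$ and strictly increasing from block to block.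
   Context: A combinatorial Hopf monoid $H$ consists of: for each finite set $I$ a finite set $H_I$, with $H_\emptyset=\{1\}$, and bijections $H_\sigma:H_I\to H_J$ for bijections $\sigma:I\to J$, functorially; associative products $H_S\times H_T\to H_{S\sqcup T}$, $(f,g)\mapsto f\cdot g$, with unit $1$; and for each $S\subseteq I$ partial maps (restriction) $h\mapsto h|_S\in H_S$ and (contraction) $h\mapsto h/S\in H_{I\setminus S}$, with $h|_I=h$, $h/\emptyset=h$, all maps compatible with relabelings, such that for $T\subseteq S\subseteq I$: $(h|_S)|_T=h|_T$, $(h/T)/(S\setminus T)=h/S$, $(h|_S)/T=(h/T)|_{S\setminus T}$, and for $f\in H_A$, $g\in H_B$, $S\subseteq A\sqcup B$: $(f\cdot g)|_S=f|_{S\cap A}\cdot g|_{S\cap B}$ and $(f\cdot g)/S=f/(S\cap A)\cdot g/(S\cap B)$; in each equation one side is defined iff the other is. A Hopf submonoid $K$ is a family $K_I\subseteq H_I$ closed under relabeling, containing $1$, closed under products, and such that restrictions and contractions of elements of $K$, when defined, lie in $K$. The character $\varphi_K$ is $\varphi_K(h)=1$ if $h\in K_I$ and $0$ otherwise (and $0$ on undefined elements). For a set composition $C=(C_1,\dots,C_k)$ of $I$ (nonempty disjoint blocks with union $I$), set $S_j=C_1\cup\dots\cup C_j$, $S_0=\emptyset$, and the minors $h_j=(h|_{S_j})/S_{j-1}\in H_{C_j}$; $\mathrm{type}(C)=(|C_1|,\dots,|C_k|)$; $M_\alpha$ is the monomial quasisymmetric function. $\Psi_\varphi(h)=\sum_{C}\big(\prod_{j}\varphi(h_j)\big)M_{\mathrm{type}(C)}$,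 the sum over all set compositions of $I$. *)

theory Defs
  imports Main
begin

text \<open>H I is the (finite) set H_I; the sets H_I are assumed pairwise disjoint
  (an element remembers its ground set). Partial maps are modelled with option.\<close>

definition omult :: "('h \<Rightarrow> 'h \<Rightarrow> 'h) \<Rightarrow> 'h option \<Rightarrow> 'h option \<Rightarrow> 'h option" where
  "omult mult x y = (case (x, y) of (Some a, Some b) \<Rightarrow> Some (mult a b) | _ \<Rightarrow> None)"

locale hopf_monoid =
  fixes H :: "'a set \<Rightarrow> 'h set"
    and one :: 'h
    and mult :: "'h \<Rightarrow> 'h \<Rightarrow> 'h"
    and res :: "'a set \<Rightarrow> 'h \<Rightarrow> 'h option"
    and con :: "'a set \<Rightarrow> 'h \<Rightarrow> 'h option"
    and relabel :: "('a \<Rightarrow> 'a) \<Rightarrow> 'h \<Rightarrow> 'h"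
  assumes H_infinite: "infinite I \<Longrightarrow> H I = {}"
    and H_finite: "finite (H I)"
    and H_disj: "h \<in> H I \<Longrightarrow> h \<in> H J \<Longrightarrow> I = J"
    and H_empty: "H {} = {one}"
    and relabel_in: "bij_betw \<sigma> I J \<Longrightarrow> h \<in> H I \<Longrightarrow> relabel \<sigma> h \<in> H J"
    and relabel_cong: "h \<in> H I \<Longrightarrow> (\<forall>x\<in>I. \<sigma> x = \<tau> x) \<Longrightarrow> relabel \<sigma> h = relabel \<tau> h"
    and relabel_id: "h \<in> H I \<Longrightarrow> relabel id h = h"
    and relabel_comp: "bij_betw \<sigma> I J \<Longrightarrow> bij_betw \<tau> J L \<Longrightarrow> h \<in> H I \<Longrightarrow>
         relabel (\<tau> \<circ> \<sigma>) h = relabel \<tau> (relabel \<sigma> h)"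
    and mult_in: "A \<inter> B = {} \<Longrightarrow> f \<in> H A \<Longrightarrow> g \<in> H B \<Longrightarrow> mult f g \<in> H (A \<union> B)"
    and mult_assoc: "A \<inter> B = {} \<Longrightarrow> A \<inter> C = {} \<Longrightarrow> B \<inter> C = {} \<Longrightarrow>
         f \<in> H A \<Longrightarrow> g \<in> H B \<Longrightarrow> k \<in> H C \<Longrightarrow> mult (mult f g) k = mult f (mult g k)"
    and mult_one_left: "f \<in> H A \<Longrightarrow> mult one f = f"
    and mult_one_right: "f \<in> H A \<Longrightarrow> mult f one = f"
    and relabel_mult: "bij_betw \<sigma> (A \<union> B) J \<Longrightarrow> A \<inter> B = {} \<Longrightarrow> f \<in> H A \<Longrightarrow> g \<in> H B \<Longrightarrow>
         relabel \<sigma> (mult f g) = mult (relabel \<sigma> f) (relabel \<sigma> g)"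
    and res_in: "h \<in> H I \<Longrightarrow> S \<subseteq> I \<Longrightarrow> res S h = Some x \<Longrightarrow> x \<in> H S"
    and con_in: "h \<in> H I \<Longrightarrow> S \<subseteq> I \<Longrightarrow> con S h = Some x \<Longrightarrow> x \<in> H (I - S)"
    and res_top: "h \<in> H I \<Longrightarrow> res I h = Some h"
    and con_empty: "h \<in> H I \<Longrightarrow> con {} h = Some h"
    and res_res: "h \<in> H I \<Longrightarrow> T \<subseteq> S \<Longrightarrow> S \<subseteq> I \<Longrightarrow>
         Option.bind (res S h) (res T) = res T h"
    and con_con: "h \<in> H I \<Longrightarrow> T \<subseteq> S \<Longrightarrow> S \<subseteq> I \<Longrightarrow>
         Option.bind (con T h) (con (S - T)) = con S h"
    and res_con: "h \<in> H I \<Longrightarrow> T \<subseteq> S \<Longrightarrow> S \<subseteq> I \<Longrightarrow>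
         Option.bind (res S h) (con T) = Option.bind (con T h) (res (S - T))"
    and res_mult: "A \<inter> B = {} \<Longrightarrow> f \<in> H A \<Longrightarrow> g \<in> H B \<Longrightarrow> S \<subseteq> A \<union> B \<Longrightarrow>
         res S (mult f g) = omult mult (res (S \<inter> A) f) (res (S \<inter> B) g)"
    and con_mult: "A \<inter> B = {} \<Longrightarrow> f \<in> H A \<Longrightarrow> g \<in> H B \<Longrightarrow> S \<subseteq> A \<union> B \<Longrightarrow>
         con S (mult f g) = omult mult (con (S \<inter> A) f) (con (S \<inter> B) g)"
    and relabel_res: "bij_betw \<sigma> I J \<Longrightarrow> h \<in> H I \<Longrightarrow> S \<subseteq> I \<Longrightarrow>
         res (\<sigma> ` S) (relabel \<sigma> h) = map_option (relabel \<sigma>) (res S h)"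
    and relabel_con: "bij_betw \<sigma> I J \<Longrightarrow> h \<in> H I \<Longrightarrow> S \<subseteq> I \<Longrightarrow>
         con (\<sigma> ` S) (relabel \<sigma> h) = map_option (relabel \<sigma>) (con S h)"

definition hopf_submonoid ::
  "('a set \<Rightarrow> 'h set) \<Rightarrow> 'h \<Rightarrow> ('h \<Rightarrow> 'h \<Rightarrow> 'h) \<Rightarrow> ('a set \<Rightarrow> 'h \<Rightarrow> 'h option) \<Rightarrow>
   ('a set \<Rightarrow> 'h \<Rightarrow> 'h option) \<Rightarrow> (('a \<Rightarrow> 'a) \<Rightarrow> 'h \<Rightarrow> 'h) \<Rightarrow> ('a set \<Rightarrow> 'h set) \<Rightarrow> bool" where
  "hopf_submonoid H one mult res con relabel K \<longleftrightarrow>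
     (\<forall>I. K I \<subseteq> H I) \<and>
     (\<forall>\<sigma> I J h. bij_betw \<sigma> I J \<longrightarrow> h \<in> K I \<longrightarrow> relabel \<sigma> h \<in> K J) \<and>
     one \<in> K {} \<and>
     (\<forall>A B f g. A \<inter> B = {} \<longrightarrow> f \<in> K A \<longrightarrow> g \<in> K B \<longrightarrow> mult f g \<in> K (A \<union> B)) \<and>
     (\<forall>I S h x. h \<in> K I \<longrightarrow> S \<subseteq> I \<longrightarrow> res S h = Some x \<longrightarrow> x \<in> K S) \<and>
     (\<forall>I S h x. h \<in> K I \<longrightarrow> S \<subseteq> I \<longrightarrow> con S h = Some x \<longrightarrow> x \<in> K (I - S))"

definition set_composition :: "'a set \<Rightarrow> 'a set list \<Rightarrow> bool" where
  "set_composition I C \<longleftrightarrow> (\<forall>B\<in>set C. B \<noteq> {}) \<and>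
     (\<forall>i<length C. \<forall>j<length C. i \<noteq> j \<longrightarrow> C ! i \<inter> C ! j = {}) \<and> \<Union>(set C) = I"

text \<open>The j-th minor (0-based): (h|S_{j+1})/S_j with S_j the union of the first j blocks.\<close>
definition minor :: "('a set \<Rightarrow> 'h \<Rightarrow> 'h option) \<Rightarrow> ('a set \<Rightarrow> 'h \<Rightarrow> 'h option) \<Rightarrow>
    'h \<Rightarrow> 'a set list \<Rightarrow> nat \<Rightarrow> 'h option" where
  "minor res con h C j =
     Option.bind (res (\<Union>(set (take (Suc j) C))) h) (con (\<Union>(set (take j C))))"

definition Delta :: "('a set \<Rightarrow> 'h \<Rightarrow> 'h option) \<Rightarrow> ('a set \<Rightarrow> 'h \<Rightarrow> 'h option) \<Rightarrow>
    'a set \<Rightarrow> 'h \<Rightarrow> 'a set list set" where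
  "Delta res con I h = {C. set_composition I C \<and> (\<forall>j<length C. minor res con h C j \<noteq> None)}"

definition Gamma :: "('a set \<Rightarrow> 'h \<Rightarrow> 'h option) \<Rightarrow> ('a set \<Rightarrow> 'h \<Rightarrow> 'h option) \<Rightarrow>
    ('a set \<Rightarrow> 'h set) \<Rightarrow> 'a set \<Rightarrow> 'h \<Rightarrow> 'a set list set" where
  "Gamma res con K I h = {C \<in> Delta res con I h.
     \<exists>j<length C. minor res con h C j \<notin> Some ` K (C ! j)}"

definition coarsening :: "'a set list \<Rightarrow> 'a set list \<Rightarrow> bool" where
  "coarsening D C \<longleftrightarrow> (\<exists>Cs. concat Cs = C \<and> (\<forall>G\<in>set Cs. G \<noteq> []) \<and>
       D = map (\<lambda>G. \<Union>(set G)) Cs)"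

definition charK :: "('a set \<Rightarrow> 'h set) \<Rightarrow> 'a set \<Rightarrow> 'h option \<Rightarrow> int" where
  "charK K J x = (case x of None \<Rightarrow> 0 | Some y \<Rightarrow> (if y \<in> K J then 1 else 0))"

text \<open>Quasisymmetric functions are represented as formal power series in variables
  x_1, x_2, ... (indexed by positive naturals): a coefficient function on exponent
  vectors m :: nat \<Rightarrow> nat (m k = exponent of x_k).\<close>
definition monoM :: "nat list \<Rightarrow> (nat \<Rightarrow> nat) \<Rightarrow> int" where
  "monoM \<alpha> m = int (card {ks. sorted_wrt (<) ks \<and> 0 \<notin> set ks \<and> length ks = length \<alpha> \<and>
      m = (\<lambda>k. \<Sum>i<length ks. if ks ! i = k then \<alpha> ! i else 0)})"

definition Psi :: "('a set \<Rightarrow> 'h \<Rightarrow> 'h option) \<Rightarrow> ('a set \<Rightarrow> 'h \<Rightarrow> 'h option) \<Rightarrow>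
    ('a set \<Rightarrow> 'h option \<Rightarrow> int) \<Rightarrow> 'a set \<Rightarrow> 'h \<Rightarrow> (nat \<Rightarrow> nat) \<Rightarrow> int" where
  "Psi res con \<phi> I h m = (\<Sum>C\<in>{C. set_composition I C}.
      (\<Prod>j<length C. \<phi> (C ! j) (minor res con h C j)) * monoM (map card C) m)"

definition Ehrhart :: "'a set \<Rightarrow> 'a set list set \<Rightarrow> (nat \<Rightarrow> nat) \<Rightarrow> int" where
  "Ehrhart I F m = int (card {a :: 'a \<Rightarrow> nat.
      (\<forall>i. i \<notin> I \<longrightarrow> a i = 0) \<and> (\<forall>i\<in>I. 0 < a i) \<and>
      (\<exists>C\<in>F. \<forall>j j' i i'. j < length C \<longrightarrow> j' < length C \<longrightarrow> i \<in> C ! j \<longrightarrow> i' \<in> C ! j' \<longrightarrow>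
          (j = j' \<longrightarrow> a i = a i') \<and> (j < j' \<longrightarrow> a i < a i')) \<and>
      m = (\<lambda>k. card {i\<in>I. a i = k})})"

end

theory Submission
  imports Defs
begin

lemma sc_nonempty: "set_composition I C \<Longrightarrow> j < length C \<Longrightarrow> C ! j \<noteq> {}"
  unfolding set_composition_def by (auto simp: nth_mem)

lemma sc_sub: "set_composition I C \<Longrightarrow> j < length C \<Longrightarrow> C ! j \<subseteq> I"
  unfolding set_composition_def by (auto simp: nth_mem)

lemma sc_disj: "set_composition I C \<Longrightarrow> j < length C \<Longrightarrow> j' < length C \<Longrightarrow> j \<noteq> j'
   \<Longrightarrow> C ! j \<inter> C ! j' = {}"
  unfolding set_composition_def by auto

lemma sc_cover: "set_composition I C \<Longrightarrow> i \<in> I \<Longrightarrow> \<exists>j<length C. i \<in> C ! j"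
  unfolding set_composition_def by (auto simp: in_set_conv_nth)

lemma sc_union: "set_composition I C \<Longrightarrow> \<Union>(set C) = I"
  unfolding set_composition_def by auto

context hopf_monoid begin

lemma minor_chain:
  assumes "h \<in> H I" "T \<subseteq> A" "A \<subseteq> B" "B \<subseteq> U" "U \<subseteq> I"
  shows "Option.bind (Option.bind (Option.bind (res U h) (con T)) (res (B - T))) (con (A - T))
         = Option.bind (res B h) (con A)"
proof (cases "res U h")
  case None
  have "Option.bind (res U h) (res B) = res B h" using res_res[OF assms(1)] assms by auto
  then show ?thesis using None by simp
next
  case (Some g)
  have gH: "g \<in> H U" using res_in[OF assms(1) _ Some] assms by auto
  have rb: "res B g = res B h" using res_res[OF assms(1), of B U] assms Some by auto
  have rc: "Option.bind (con T g) (res (B - T)) = Option.bind (res B g) (con T)"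
    using res_con[OF gH, of T B] assms by auto
  show ?thesis
  proof (cases "res B h")
    case None then show ?thesis using Some rb rc by simp
  next
    case Some2: (Some x)
    have xH: "x \<in> H B" using res_in[OF assms(1) _ Some2] assms by auto
    have "Option.bind (con T x) (con (A - T)) = con A x" using con_con[OF xH, of T A] assms by auto
    then show ?thesis using Some rb rc Some2 by simp
  qed
qed

lemma K_chain:
  assumes sub: "hopf_submonoid H one mult res con relabel K"
    and "h \<in> H I" "T \<subseteq> A" "A \<subseteq> B" "B \<subseteq> U" "U \<subseteq> I"
    and d: "Option.bind (res U h) (con T) = Some d" "d \<in> K J"
    and y: "Option.bind (Option.bind (Some d) (res (B - T))) (con (A - T)) = Some y"
  shows "y \<in> K ((B - T) - (A - T))"
proof -
  have KH: "\<And>I. K I \<subseteq> H I" and Kres: "\<And>I S h x. h \<in> K I \<Longrightarrow> S \<subseteq> I \<Longrightarrow> res S h = Some x \<Longrightarrow> x \<in> K S"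
    and Kcon: "\<And>I S h x. h \<in> K I \<Longrightarrow> S \<subseteq> I \<Longrightarrow> con S h = Some x \<Longrightarrow> x \<in> K (I - S)"
    using sub unfolding hopf_submonoid_def by metis+
  obtain g where g: "res U h = Some g" using d by (cases "res U h") auto
  have gH: "g \<in> H U" using res_in[OF assms(2) _ g] assms by auto
  have cg: "con T g = Some d" using d g by simp
  have dH: "d \<in> H (U - T)" using con_in[OF gH _ cg] assms by auto
  have "d \<in> H J" using KH d by blast
  then have J: "J = U - T" using H_disj dH by blast
  obtain e where e: "res (B - T) d = Some e" using y by (cases "res (B - T) d") auto
  have eK: "e \<in> K (B - T)" using Kres[OF d(2) _ e] J assms by blast
  have ce: "con (A - T) e = Some y" using y e by simp
  show ?thesis using Kcon[OF eK _ ce] assms by blast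
qed

end

lemma concat_index:
  "j < length (concat Cs) \<Longrightarrow> \<exists>k<length Cs. length (concat (take k Cs)) \<le> j \<and>
      j < length (concat (take (Suc k) Cs))"
proof (induction Cs arbitrary: j)
  case Nil then show ?case by simp
next
  case (Cons G Gs)
  show ?case
  proof (cases "j < length G")
    case True then show ?thesis by (rule_tac x=0 in exI) simp
  next
    case False
    then have "j - length G < length (concat Gs)" using Cons.prems by simp
    then obtain k where "k < length Gs" "length (concat (take k Gs)) \<le> j - length G"
      "j - length G < length (concat (take (Suc k) Gs))" using Cons.IH by blast
    then show ?thesis using False by (rule_tac x="Suc k" in exI) auto
  qed
qed

lemma concat_take_eq: "concat (take k Cs) = take (length (concat (take k Cs))) (concat Cs)"
proof -
  have "concat Cs = concat (take k Cs) @ concat (drop k Cs)"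
    by (metis append_take_drop_id concat_append)
  then show ?thesis by (metis append_eq_conv_conj)
qed

lemma union_take_map:
  "\<Union>(set (take k (map (\<lambda>G. \<Union>(set G)) Cs))) = \<Union>(set (take (length (concat (take k Cs))) (concat Cs)))"
proof -
  have "\<Union>(set (take k (map (\<lambda>G. \<Union>(set G)) Cs))) = \<Union>(set (concat (take k Cs)))"
    by (auto simp: take_map)
  then show ?thesis using concat_take_eq by metis
qed

lemma union_take_mono: "m \<le> n \<Longrightarrow> \<Union>(set (take m C)) \<subseteq> \<Union>(set (take n C))"
  using set_take_subset_set_take[of m n C] by (rule Union_mono)

lemma part1:
  assumes hm: "hopf_monoid H one mult res con relabel"
    and sub: "hopf_submonoid H one mult res con relabel K"
    and hI: "h \<in> H I"
    and C: "C \<in> Gamma res con K I h" and D: "D \<in> Delta res con I h" and cD: "coarsening D C"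
  shows "D \<in> Gamma res con K I h"
proof -
  obtain Cs where Cs: "concat Cs = C" "D = map (\<lambda>G. \<Union>(set G)) Cs"
    using cD unfolding coarsening_def by blast
  obtain j where j: "j < length C" "minor res con h C j \<notin> Some ` K (C ! j)"
    using C unfolding Gamma_def by blast
  have sc: "set_composition I C" and mdef: "minor res con h C j \<noteq> None"
    using C j unfolding Gamma_def Delta_def by auto
  obtain k where k: "k < length Cs" "length (concat (take k Cs)) \<le> j"
      "j < length (concat (take (Suc k) Cs))"
    using concat_index[of j Cs] j Cs by auto
  define n1 where "n1 = length (concat (take k Cs))"
  define n2 where "n2 = length (concat (take (Suc k) Cs))"
  define T where "T = \<Union>(set (take n1 C))"
  define U where "U = \<Union>(set (take n2 C))"
  define A where "A = \<Union>(set (take j C))"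
  define B where "B = \<Union>(set (take (Suc j) C))"
  have TA: "T \<subseteq> A" unfolding T_def A_def n1_def using union_take_mono[OF k(2)] .
  have AB: "A \<subseteq> B" unfolding B_def A_def using union_take_mono[of j "Suc j"] by simp
  have BU: "B \<subseteq> U" unfolding B_def U_def n2_def using union_take_mono[of "Suc j" n2 C] k(3) n2_def by simp
  have "U \<subseteq> \<Union>(set C)" unfolding U_def using set_take_subset[of n2 C] by (rule Union_mono)
  then have UI: "U \<subseteq> I" using sc_union[OF sc] by simp
  have BA: "B = A \<union> C ! j" unfolding A_def B_def using take_Suc_conv_app_nth[OF j(1)] by auto
  have disjA: "C ! j \<inter> A = {}"
  proof -
    { fix x assume "x \<in> C ! j" "x \<in> A"
      then obtain i where "i < j" "x \<in> C ! i" unfolding A_def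
        by (auto simp: in_set_conv_nth)
      then have False using sc_disj[OF sc, of i j] j \<open>x \<in> C ! j\<close> by auto }
    then show ?thesis by blast
  qed
  have eqset: "(B - T) - (A - T) = C ! j" using BA disjA TA by blast
  have mD: "minor res con h D k = Option.bind (res U h) (con T)"
    unfolding minor_def T_def U_def n1_def n2_def Cs(2) union_take_map Cs(1) ..
  have mC: "minor res con h C j = Option.bind (res B h) (con A)"
    unfolding minor_def A_def B_def ..
  have "\<exists>k<length D. minor res con h D k \<notin> Some ` K (D ! k)"
  proof (rule ccontr)
    assume "\<not> ?thesis"
    then have "minor res con h D k \<in> Some ` K (D ! k)" using k Cs by simp
    then obtain d where d: "minor res con h D k = Some d" "d \<in> K (D ! k)"
      by (auto simp: image_iff)
    have ch: "minor res con h C j = Option.bind (Option.bind (Some d) (res (B - T))) (con (A - T))"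
      using hopf_monoid.minor_chain[OF hm hI TA AB BU UI] mC mD d by simp
    obtain y where y: "minor res con h C j = Some y" using mdef by blast
    have "y \<in> K (C ! j)"
      using hopf_monoid.K_chain[OF hm sub hI TA AB BU UI, of d "D ! k" y] d mD ch y eqset by simp
    then show False using j y by auto
  qed
  then show ?thesis using D unfolding Gamma_def by blast
qed


lemma sc_finite: "finite I \<Longrightarrow> finite {C. set_composition I C}"
proof -
  assume fI: "finite I"
  have "{C. set_composition I C} \<subseteq> {xs. set xs \<subseteq> Pow I \<and> length xs \<le> card I}"
  proof
    fix C assume "C \<in> {C. set_composition I C}"
    then have sc: "set_composition I C" by simp
    define r where "r = (\<lambda>j. SOME i. i \<in> C ! j)"
    have r: "\<And>j. j < length C \<Longrightarrow> r j \<in> C ! j"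
      unfolding r_def using sc_nonempty[OF sc] by (simp add: some_in_eq)
    have "inj_on r {..<length C}"
    proof (rule inj_onI)
      fix x y assume "x \<in> {..<length C}" "y \<in> {..<length C}" "r x = r y"
      then have xy: "x < length C" "y < length C" "r x = r y" by auto
      then have "r x \<in> C ! x" "r x \<in> C ! y" "x < length C" "y < length C" using r[of x] r[of y] by auto
      then show "x = y" using sc_disj[OF sc, of x y] by blast
    qed
    moreover have "r ` {..<length C} \<subseteq> I" using r sc_sub[OF sc] by auto
    ultimately have "card {..<length C} \<le> card I" using card_inj_on_le fI by blast
    moreover have "set C \<subseteq> Pow I" using sc_union[OF sc] by auto
    ultimately show "C \<in> {xs. set xs \<subseteq> Pow I \<and> length xs \<le> card I}" by simp
  qed
  moreover have "finite {xs. set xs \<subseteq> Pow I \<and> length xs \<le> card I}"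
    using finite_lists_length_le fI by blast
  ultimately show ?thesis by (rule finite_subset)
qed

lemma charK_eq: "charK K J x = (if x \<in> Some ` K J then 1 else 0)"
  by (cases x) (auto simp: charK_def)

lemma DG_iff: "C \<in> Delta res con I h - Gamma res con K I h \<longleftrightarrow>
   set_composition I C \<and> (\<forall>j<length C. minor res con h C j \<in> Some ` K (C ! j))"
  unfolding Delta_def Gamma_def by auto

lemma prod_charK:
  "(\<Prod>j<length C. charK K (C ! j) (minor res con h C j)) =
     (if \<forall>j<length C. minor res con h C j \<in> Some ` K (C ! j) then 1 else 0)"
proof (cases "\<forall>j<length C. minor res con h C j \<in> Some ` K (C ! j)")
  case True
  then show ?thesis by (simp add: charK_eq)
next
  case False
  then obtain j where "j < length C" "minor res con h C j \<notin> Some ` K (C ! j)" by blast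
  then have "charK K (C ! j) (minor res con h C j) = 0" by (simp add: charK_eq)
  then have "(\<Prod>j<length C. charK K (C ! j) (minor res con h C j)) = 0"
    using \<open>j < length C\<close> by (intro prod_zero) auto
  then show ?thesis by (simp only: if_not_P[OF False])
qed

lemma if01_mult: "(if P then (1::int) else 0) * x = (if P then x else 0)" by simp

lemma part2:
  assumes "finite I"
  shows "Psi res con (charK K) I h
    = (\<lambda>m. \<Sum>C\<in>Delta res con I h - Gamma res con K I h. monoM (map card C) m)"
proof
  fix m
  have eq: "Delta res con I h - Gamma res con K I h =
     {C \<in> {C. set_composition I C}. \<forall>j<length C. minor res con h C j \<in> Some ` K (C ! j)}"
    unfolding set_eq_iff DG_iff mem_Collect_eq by (rule allI) (rule refl)
  show "Psi res con (charK K) I h m = (\<Sum>C\<in>Delta res con I h - Gamma res con K I h. monoM (map card C) m)"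
    unfolding Psi_def eq sum.inter_filter[OF sc_finite[OF assms]] prod_charK
    by (rule sum.cong) (rule refl, simp only: if01_mult)
qed


definition blk :: "'a set list \<Rightarrow> 'a \<Rightarrow> nat" where
  "blk C i = (LEAST j. j < length C \<and> i \<in> C ! j)"

definition aOf :: "'a set list \<Rightarrow> nat list \<Rightarrow> 'a \<Rightarrow> nat" where
  "aOf C ks i = (if \<exists>j<length C. i \<in> C ! j then ks ! blk C i else 0)"

definition KS :: "'a set list \<Rightarrow> (nat \<Rightarrow> nat) \<Rightarrow> nat list set" where
  "KS C m = {ks. sorted_wrt (<) ks \<and> 0 \<notin> set ks \<and> length ks = length (map card C) \<and>
      m = (\<lambda>k. \<Sum>i<length ks. if ks ! i = k then map card C ! i else 0)}"

definition compat :: "('a \<Rightarrow> nat) \<Rightarrow> 'a set list \<Rightarrow> bool" where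
  "compat a C = (\<forall>j j' i i'. j < length C \<longrightarrow> j' < length C \<longrightarrow> i \<in> C ! j \<longrightarrow> i' \<in> C ! j' \<longrightarrow>
          (j = j' \<longrightarrow> a i = a i') \<and> (j < j' \<longrightarrow> a i < a i'))"

lemma monoM_KS: "monoM (map card C) m = int (card (KS C m))"
  unfolding monoM_def KS_def ..

lemma blk_eq:
  assumes sc: "set_composition I C" and j: "j < length C" "i \<in> C ! j"
  shows "blk C i = j"
  unfolding blk_def
proof (rule Least_equality)
  show "j < length C \<and> i \<in> C ! j" using j by simp
  fix y assume y: "y < length C \<and> i \<in> C ! y"
  have "y = j"
  proof (rule ccontr)
    assume "y \<noteq> j"
    then have "C ! y \<inter> C ! j = {}" using sc_disj[OF sc] y j by blast
    then show False using y j by blast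
  qed
  then show "j \<le> y" by simp
qed

lemma aOf_eq:
  assumes sc: "set_composition I C" and j: "j < length C" "i \<in> C ! j"
  shows "aOf C ks i = ks ! j"
proof -
  have "\<exists>j<length C. i \<in> C ! j" using j by blast
  then show ?thesis unfolding aOf_def using blk_eq[OF sc j] by simp
qed

lemma aOf_out:
  assumes sc: "set_composition I C" and i: "i \<notin> I"
  shows "aOf C ks i = 0"
proof -
  have "\<not> (\<exists>j<length C. i \<in> C ! j)"
    using sc_sub[OF sc] i by blast
  then show ?thesis unfolding aOf_def by (rule if_not_P)
qed

lemma card_fiber:
  assumes sc: "set_composition I C" and fI: "finite I" and len: "length ks = length C"
  shows "card {i\<in>I. aOf C ks i = k} = (\<Sum>j<length ks. if ks ! j = k then card (C ! j) else 0)"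
proof -
  let ?J = "{j \<in> {..<length C}. ks ! j = k}"
  have eq: "{i\<in>I. aOf C ks i = k} = (\<Union>j\<in>?J. C ! j)"
  proof
    show "{i\<in>I. aOf C ks i = k} \<subseteq> (\<Union>j\<in>?J. C ! j)"
    proof
      fix i assume "i \<in> {i\<in>I. aOf C ks i = k}"
      then have i: "i \<in> I" "aOf C ks i = k" by auto
      obtain j where j: "j < length C" "i \<in> C ! j" using sc_cover[OF sc i(1)] by blast
      have "ks ! j = k" using aOf_eq[OF sc j, of ks] i by simp
      then show "i \<in> (\<Union>j\<in>?J. C ! j)" using j by blast
    qed
    show "(\<Union>j\<in>?J. C ! j) \<subseteq> {i\<in>I. aOf C ks i = k}"
    proof
      fix i assume "i \<in> (\<Union>j\<in>?J. C ! j)"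
      then obtain j where j: "j < length C" "i \<in> C ! j" "ks ! j = k" by auto
      have "i \<in> I" using sc_sub[OF sc j(1)] j(2) by blast
      then show "i \<in> {i\<in>I. aOf C ks i = k}" using aOf_eq[OF sc j(1,2), of ks] j(3) by simp
    qed
  qed
  have fin: "\<forall>j\<in>?J. finite (C ! j)" using sc_sub[OF sc] fI finite_subset by blast
  have dis: "\<forall>j\<in>?J. \<forall>j'\<in>?J. j \<noteq> j' \<longrightarrow> C ! j \<inter> C ! j' = {}" using sc_disj[OF sc] by blast
  have "card {i\<in>I. aOf C ks i = k} = (\<Sum>j\<in>?J. card (C ! j))"
    unfolding eq by (rule card_UN_disjoint[OF _ fin dis]) simp
  also have "\<dots> = (\<Sum>j<length C. if ks ! j = k then card (C ! j) else 0)"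
    by (rule sum.inter_filter) simp
  finally show ?thesis using len by simp
qed

lemma KS_sum: "length ks = length C \<Longrightarrow>
   (\<lambda>k. \<Sum>i<length ks. if ks ! i = k then map card C ! i else 0) =
   (\<lambda>k. \<Sum>j<length ks. if ks ! j = k then card (C ! j) else 0)"
  by (intro ext sum.cong) auto

lemma KS_to:
  assumes sc: "set_composition I C" and fI: "finite I" and ks: "ks \<in> KS C m"
  shows "(\<forall>i. i \<notin> I \<longrightarrow> aOf C ks i = 0) \<and> (\<forall>i\<in>I. 0 < aOf C ks i) \<and> compat (aOf C ks) C \<and>
     m = (\<lambda>k. card {i\<in>I. aOf C ks i = k})"
proof -
  have s: "sorted_wrt (<) ks" and z: "0 \<notin> set ks" and len: "length ks = length C"
    and mm: "m = (\<lambda>k. \<Sum>i<length ks. if ks ! i = k then map card C ! i else 0)"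
    using ks unfolding KS_def by auto
  have 1: "\<forall>i. i \<notin> I \<longrightarrow> aOf C ks i = 0" using aOf_out[OF sc] by blast
  have 2: "\<forall>i\<in>I. 0 < aOf C ks i"
  proof
    fix i assume "i \<in> I"
    then obtain j where j: "j < length C" "i \<in> C ! j" using sc_cover[OF sc] by blast
    have "ks ! j \<in> set ks" using j len by simp
    then show "0 < aOf C ks i" using aOf_eq[OF sc j] z by (metis gr0I)
  qed
  have 3: "compat (aOf C ks) C"
    unfolding compat_def
  proof (intro allI impI)
    fix j j' i i' assume a: "j < length C" "j' < length C" "i \<in> C ! j" "i' \<in> C ! j'"
    show "(j = j' \<longrightarrow> aOf C ks i = aOf C ks i') \<and> (j < j' \<longrightarrow> aOf C ks i < aOf C ks i')"
      using aOf_eq[OF sc a(1,3)] aOf_eq[OF sc a(2,4)] sorted_wrt_nth_less[OF s, of j j'] a len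
      by simp
  qed
  have 4: "m = (\<lambda>k. card {i\<in>I. aOf C ks i = k})"
    unfolding mm KS_sum[OF len] using card_fiber[OF sc fI len] by simp
  show ?thesis using 1 2 3 4 by blast
qed

lemma KS_from:
  assumes sc: "set_composition I C" and fI: "finite I"
    and a1: "\<forall>i. i \<notin> I \<longrightarrow> a i = 0" and a2: "\<forall>i\<in>I. 0 < a i" and a3: "compat a C"
    and a4: "m = (\<lambda>k. card {i\<in>I. a i = k})"
  shows "\<exists>ks\<in>KS C m. a = aOf C ks"
proof -
  define ks where "ks = map (\<lambda>B. a (SOME i. i \<in> B)) C"
  have len: "length ks = length C" unfolding ks_def by simp
  have rep: "\<And>j. j < length C \<Longrightarrow> (SOME i. i \<in> C ! j) \<in> C ! j"
    using sc_nonempty[OF sc] by (simp add: some_in_eq)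
  have ksj: "\<And>j i. j < length C \<Longrightarrow> i \<in> C ! j \<Longrightarrow> a i = ks ! j"
  proof -
    fix j i assume j: "j < length C" "i \<in> C ! j"
    have "a i = a (SOME i. i \<in> C ! j)" using a3 j rep[OF j(1)] unfolding compat_def by blast
    then show "a i = ks ! j" unfolding ks_def using j by simp
  qed
  have aeq: "a = aOf C ks"
  proof
    fix i show "a i = aOf C ks i"
    proof (cases "i \<in> I")
      case True
      then obtain j where j: "j < length C" "i \<in> C ! j" using sc_cover[OF sc] by blast
      then show ?thesis using ksj[OF j] aOf_eq[OF sc j] by simp
    next
      case False then show ?thesis using a1 aOf_out[OF sc False] by simp
    qed
  qed
  have s: "sorted_wrt (<) ks"
    unfolding sorted_wrt_iff_nth_less
  proof (intro allI impI)
    fix j j' assume "j < j'" "j' < length ks"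
    then show "ks ! j < ks ! j'" using a3 rep[of j] rep[of j'] ksj[of j] ksj[of j'] len
      unfolding compat_def by (metis order.strict_trans)
  qed
  have z: "0 \<notin> set ks"
  proof
    assume "0 \<in> set ks"
    then obtain j where j: "j < length C" "ks ! j = 0" using len by (metis in_set_conv_nth)
    have "(SOME i. i \<in> C ! j) \<in> I" using rep[OF j(1)] sc_sub[OF sc j(1)] by blast
    then show False using a2 ksj[OF j(1) rep[OF j(1)]] j(2) by auto
  qed
  have mm: "m = (\<lambda>k. \<Sum>i<length ks. if ks ! i = k then map card C ! i else 0)"
    unfolding KS_sum[OF len] a4 using card_fiber[OF sc fI len] aeq by simp
  have "ks \<in> KS C m" unfolding KS_def using s z len mm by simp
  then show ?thesis using aeq by blast
qed

lemma KS_unique: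
  assumes sc: "set_composition I C" and fI: "finite I" and ks: "ks \<in> KS C m" and ks': "ks' \<in> KS C m"
  shows "ks = ks'"
proof -
  have key: "\<And>ks. ks \<in> KS C m \<Longrightarrow> set ks = {k. 0 < m k}"
  proof -
    fix ks assume ks: "ks \<in> KS C m"
    have len: "length ks = length C"
      and mm: "m = (\<lambda>k. \<Sum>i<length ks. if ks ! i = k then map card C ! i else 0)"
      using ks unfolding KS_def by auto
    have mm2: "\<And>k. m k = (\<Sum>j<length ks. if ks ! j = k then card (C ! j) else 0)"
      using fun_cong[OF mm] KS_sum[OF len] by metis
    show "set ks = {k. 0 < m k}"
    proof
      show "set ks \<subseteq> {k. 0 < m k}"
      proof
        fix k assume "k \<in> set ks"
        then obtain j where j: "j < length ks" "ks ! j = k" by (metis in_set_conv_nth)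
        have cpos: "0 < card (C ! j)"
          using sc_nonempty[OF sc, of j] sc_sub[OF sc, of j] j len fI
          by (metis card_gt_0_iff finite_subset)
        have "card (C ! j) \<le> (\<Sum>j<length ks. if ks ! j = k then card (C ! j) else 0)"
          using member_le_sum[of j "{..<length ks}" "\<lambda>j. if ks ! j = k then card (C ! j) else 0"] j
          by simp
        then show "k \<in> {k. 0 < m k}" using mm2 cpos by simp
      qed
      show "{k. 0 < m k} \<subseteq> set ks"
      proof
        fix k assume "k \<in> {k. 0 < m k}"
        then have "(\<Sum>j<length ks. if ks ! j = k then card (C ! j) else 0) > 0" using mm2 by simp
        moreover have "\<exists>j<length ks. ks ! j = k"
        proof (rule ccontr)
          assume "\<not> (\<exists>j<length ks. ks ! j = k)"
          then have "(\<Sum>j<length ks. if ks ! j = k then card (C ! j) else 0) = 0"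
            by (intro sum.neutral) auto
          then show False using calculation by simp
        qed
        then show "k \<in> set ks" by (auto simp: in_set_conv_nth)
      qed
    qed
  qed
  have "sorted_wrt (<) ks" "sorted_wrt (<) ks'" using ks ks' unfolding KS_def by auto
  then show ?thesis using key[OF ks] key[OF ks'] strict_sorted_equal by metis
qed

lemma aOf_disj:
  assumes sc: "set_composition I C" and sc': "set_composition I C'"
    and ks: "ks \<in> KS C m" and ks': "ks' \<in> KS C' m"
    and eq: "aOf C ks = aOf C' ks'"
  shows "C = C'"
proof -
  have img: "\<And>C ks. set_composition I C \<Longrightarrow> ks \<in> KS C m \<Longrightarrow> aOf C ks ` I = set ks"
  proof -
    fix C ks assume sc: "set_composition I C" and ks: "ks \<in> KS C m"
    have len: "length ks = length C" using ks unfolding KS_def by auto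
    show "aOf C ks ` I = set ks"
    proof
      show "aOf C ks ` I \<subseteq> set ks"
      proof
        fix x assume "x \<in> aOf C ks ` I"
        then obtain i where i: "i \<in> I" "x = aOf C ks i" by blast
        obtain j where j: "j < length C" "i \<in> C ! j" using sc_cover[OF sc i(1)] by blast
        show "x \<in> set ks" using aOf_eq[OF sc j] i j len by simp
      qed
      show "set ks \<subseteq> aOf C ks ` I"
      proof
        fix x assume "x \<in> set ks"
        then obtain j where j: "j < length ks" "ks ! j = x" by (metis in_set_conv_nth)
        have jC: "j < length C" using j len by simp
        obtain i where i: "i \<in> C ! j" using sc_nonempty[OF sc jC] by blast
        have "i \<in> I" using sc_sub[OF sc jC] i by blast
        then show "x \<in> aOf C ks ` I" using aOf_eq[OF sc _ i, of ks] j len by force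
      qed
    qed
  qed
  have s: "sorted_wrt (<) ks" "sorted_wrt (<) ks'" using ks ks' unfolding KS_def by auto
  have kk: "ks' = ks" using img[OF sc ks] img[OF sc' ks'] eq s strict_sorted_equal by metis
  have len: "length ks = length C" "length ks' = length C'" using ks ks' unfolding KS_def by auto
  have dist: "distinct ks" using s(1) strict_sorted_iff by blast
  have sub: "\<And>j. j < length C \<Longrightarrow> C ! j \<subseteq> C' ! j"
  proof
    fix j x assume j: "j < length C" "x \<in> C ! j"
    have "x \<in> I" using sc_sub[OF sc j(1)] j(2) by blast
    then obtain j' where j': "j' < length C'" "x \<in> C' ! j'" using sc_cover[OF sc'] by blast
    have "ks ! j = ks ! j'" using aOf_eq[OF sc j, of ks] aOf_eq[OF sc' j', of ks'] eq kk by simp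
    then have "j = j'" using dist j j' len kk nth_eq_iff_index_eq by metis
    then show "x \<in> C' ! j" using j' by simp
  qed
  have sub': "\<And>j. j < length C' \<Longrightarrow> C' ! j \<subseteq> C ! j"
  proof
    fix j x assume j: "j < length C'" "x \<in> C' ! j"
    have "x \<in> I" using sc_sub[OF sc' j(1)] j(2) by blast
    then obtain j' where j': "j' < length C" "x \<in> C ! j'" using sc_cover[OF sc] by blast
    have "ks ! j = ks ! j'" using aOf_eq[OF sc j', of ks] aOf_eq[OF sc' j, of ks'] eq kk by simp
    then have "j = j'" using dist j j' len kk nth_eq_iff_index_eq by metis
    then show "x \<in> C ! j" using j' by simp
  qed
  show ?thesis
  proof (rule nth_equalityI)
    show "length C = length C'" using len kk by simp
    fix j assume "j < length C"
    then show "C ! j = C' ! j" using sub sub' len kk by (simp add: subset_antisym)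
  qed
qed


lemma KS_finite:
  assumes sc: "set_composition I C" and fI: "finite I"
  shows "finite (KS C m)"
proof (cases "KS C m = {}")
  case True then show ?thesis by simp
next
  case False
  then obtain ks0 where ks0: "ks0 \<in> KS C m" by blast
  have "KS C m \<subseteq> {ks0}" using KS_unique[OF sc fI _ ks0] by blast
  then show ?thesis using finite_subset by blast
qed

lemma part3:
  assumes fI: "finite I" and F: "F \<subseteq> {C. set_composition I C}"
  shows "Ehrhart I F m = (\<Sum>C\<in>F. monoM (map card C) m)"
proof -
  have scF: "\<And>C. C \<in> F \<Longrightarrow> set_composition I C" using F by blast
  have finF: "finite F" using finite_subset[OF F sc_finite[OF fI]] .
  have seteq: "{a :: 'a \<Rightarrow> nat. (\<forall>i. i \<notin> I \<longrightarrow> a i = 0) \<and> (\<forall>i\<in>I. 0 < a i) \<and>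
      (\<exists>C\<in>F. compat a C) \<and> m = (\<lambda>k. card {i\<in>I. a i = k})} = (\<Union>C\<in>F. aOf C ` KS C m)"
  proof
    show "{a. (\<forall>i. i \<notin> I \<longrightarrow> a i = 0) \<and> (\<forall>i\<in>I. 0 < a i) \<and>
      (\<exists>C\<in>F. compat a C) \<and> m = (\<lambda>k. card {i\<in>I. a i = k})} \<subseteq> (\<Union>C\<in>F. aOf C ` KS C m)"
    proof
      fix a assume "a \<in> {a. (\<forall>i. i \<notin> I \<longrightarrow> a i = 0) \<and> (\<forall>i\<in>I. 0 < a i) \<and>
        (\<exists>C\<in>F. compat a C) \<and> m = (\<lambda>k. card {i\<in>I. a i = k})}"
      then have a: "\<forall>i. i \<notin> I \<longrightarrow> a i = 0" "\<forall>i\<in>I. 0 < a i" "m = (\<lambda>k. card {i\<in>I. a i = k})"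
        and "\<exists>C\<in>F. compat a C" by auto
      then obtain C where C: "C \<in> F" "compat a C" by blast
      obtain ks where "ks \<in> KS C m" "a = aOf C ks" using KS_from[OF scF[OF C(1)] fI a(1,2) C(2) a(3)] by blast
      then show "a \<in> (\<Union>C\<in>F. aOf C ` KS C m)" using C(1) by blast
    qed
    show "(\<Union>C\<in>F. aOf C ` KS C m) \<subseteq> {a. (\<forall>i. i \<notin> I \<longrightarrow> a i = 0) \<and> (\<forall>i\<in>I. 0 < a i) \<and>
      (\<exists>C\<in>F. compat a C) \<and> m = (\<lambda>k. card {i\<in>I. a i = k})}"
    proof
      fix a assume "a \<in> (\<Union>C\<in>F. aOf C ` KS C m)"
      then obtain C ks where C: "C \<in> F" "ks \<in> KS C m" "a = aOf C ks" by blast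
      have "(\<forall>i. i \<notin> I \<longrightarrow> a i = 0) \<and> (\<forall>i\<in>I. 0 < a i) \<and> compat a C \<and>
          m = (\<lambda>k. card {i\<in>I. a i = k})" using KS_to[OF scF[OF C(1)] fI C(2)] C(3) by simp
      then show "a \<in> {a. (\<forall>i. i \<notin> I \<longrightarrow> a i = 0) \<and> (\<forall>i\<in>I. 0 < a i) \<and>
        (\<exists>C\<in>F. compat a C) \<and> m = (\<lambda>k. card {i\<in>I. a i = k})}" using C(1) by blast
    qed
  qed
  have fin: "\<forall>C\<in>F. finite (aOf C ` KS C m)" using KS_finite[OF scF fI] by blast
  have dis: "\<forall>C\<in>F. \<forall>C'\<in>F. C \<noteq> C' \<longrightarrow> aOf C ` KS C m \<inter> aOf C' ` KS C' m = {}"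
  proof (intro ballI impI)
    fix C C' assume C: "C \<in> F" "C' \<in> F" "C \<noteq> C'"
    show "aOf C ` KS C m \<inter> aOf C' ` KS C' m = {}"
    proof (rule ccontr)
      assume "aOf C ` KS C m \<inter> aOf C' ` KS C' m \<noteq> {}"
      then obtain ks ks' where "ks \<in> KS C m" "ks' \<in> KS C' m" "aOf C ks = aOf C' ks'" by blast
      then have "C = C'" using aOf_disj[OF scF[OF C(1)] scF[OF C(2)]] by blast
      then show False using C(3) by simp
    qed
  qed
  have inj: "\<And>C. C \<in> F \<Longrightarrow> card (aOf C ` KS C m) = card (KS C m)"
  proof -
    fix C assume C: "C \<in> F"
    have "inj_on (aOf C) (KS C m)"
      by (rule inj_onI) (rule KS_unique[OF scF[OF C] fI])
    then show "card (aOf C ` KS C m) = card (KS C m)" by (rule card_image)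
  qed
  have "Ehrhart I F m = int (card (\<Union>C\<in>F. aOf C ` KS C m))"
    unfolding Ehrhart_def compat_def[symmetric] seteq ..
  also have "\<dots> = int (\<Sum>C\<in>F. card (aOf C ` KS C m))"
    using card_UN_disjoint[OF finF fin dis] by simp
  also have "\<dots> = (\<Sum>C\<in>F. int (card (KS C m)))"
    using inj by (simp add: of_nat_sum)
  also have "\<dots> = (\<Sum>C\<in>F. monoM (map card C) m)" by (simp add: monoM_KS)
  finally show ?thesis .
qed

theorem mainTheorem3:
  fixes H :: "'a set \<Rightarrow> 'h set" and K :: "'a set \<Rightarrow> 'h set" and I :: "'a set" and h :: 'h
  assumes "hopf_monoid H one mult res con relabel"
    and "hopf_submonoid H one mult res con relabel K"
    and "finite I"
    and "h \<in> H I"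
  shows "(\<forall>C D. C \<in> Gamma res con K I h \<and> D \<in> Delta res con I h \<and> coarsening D C
            \<longrightarrow> D \<in> Gamma res con K I h)
       \<and> Psi res con (charK K) I h
            = (\<lambda>m. \<Sum>C\<in>Delta res con I h - Gamma res con K I h. monoM (map card C) m)
       \<and> Psi res con (charK K) I h = Ehrhart I (Delta res con I h - Gamma res con K I h)"
proof (intro conjI allI impI)
  fix C D assume "C \<in> Gamma res con K I h \<and> D \<in> Delta res con I h \<and> coarsening D C"
  then show "D \<in> Gamma res con K I h" using part1[OF assms(1,2,4)] by blast
next
  show P2: "Psi res con (charK K) I h
            = (\<lambda>m. \<Sum>C\<in>Delta res con I h - Gamma res con K I h. monoM (map card C) m)"
    by (rule part2[OF assms(3)])
  have F: "Delta res con I h - Gamma res con K I h \<subseteq> {C. set_composition I C}"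
    unfolding Delta_def by blast
  show "Psi res con (charK K) I h = Ehrhart I (Delta res con I h - Gamma res con K I h)"
    unfolding P2 using part3[OF assms(3) F] by (intro ext) simp
qed

end
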